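(* Consider the matched-pair setting below. Suppose that the assumed model over $\gamma$ is parametrized by $\lambda$, producing a log-likelihood contribution $\ell(\psi,\lambda;y_1,y_0)$, assumed strictly concave. Suppose further that, conditionally on $\gamma$, $Y_1$ and $Y_0$ have a joint distribution that is parametrized $\psi$-symmetrically, and that the group induces antisymmetry on the log-likelihood derivative. Then $\psi^*\perp_m\Lambda$ and $$0=\mathbb{E}_m[\nabla_\psi\ell(\psi^*,\lambda)]=\int_{\mathscr{Y}}\int_{\mathscr{Y}}\nabla_\psi\ell(\psi^*,\lambda;y_1,y_0)\,m(y_1,y_0)\,dy_1dy_0$$ for all $\lambda\in\Lambda$. Consequently $\psi_m^0=\psi^*$.
   Context: Matched pairs: for each of $n$ independent pairs, $(Y_1,Y_0)$ are outcomes on a treated and an untreated unit. Conditionally on a pair-specific nuisance parameter $\gamma$, $Y_1$ and $Y_0$ are independent with densities $f_1(\cdot;\psi,\gamma)$ and $f_0(\cdot;\psi,\gamma)$, and $\psi$ is an interest (treatment) parameter with true value $\psi^*$. The $\gamma$'s are i.i.d. with an unknown density $f$, so the true density of a pair is $m(y_1,y_0)=\int f_1(y_1;\psi^*,\gamma)f_0(y_0;\psi^*,\gamma)f(\gamma)\,d\gamma$. The assumed model takes $\gamma$ to have density $h(\gamma;\lambda)$, $\lambda\in\Lambda$, giving the single-pair log-likelihood $\ell(\psi,\lambda;y_1,y_0)=\log\int f_1(y_1;\psi,\gamma)f_0(y_0;\psi,\gamma)h(\gamma;\lambda)\,d\gamma$; the full log-likelihood $\ell(\psi,\lambda)$ is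 the sum over pairs. $\mathbb{E}_m$ is expectation under $m$. $(\psi_m^0,\lambda_m^0)$ solves $\mathbb{E}_m[\nabla_{(\psi,\lambda)}\ell(\psi_m^0,\lambda_m^0)]=0$ (the probability limit of the maximum likelihood estimator). $\psi^*\perp_m\Lambda$ means $\mathbb{E}_m[\nabla^2_{\psi\lambda}\ell(\psi^*,\lambda)]=0$ for all $\lambda\in\Lambda$. Transformation model: a group $G$ acts continuously on the sample space $\mathscr{Y}$ and on the parameter space $\Gamma$ of $\gamma$, and the distributions satisfy $p(gE;g\gamma)=p(E;\gamma)$ for all $g\in G$, events $E$, $\gamma\in\Gamma$. Symmetric parametrization: there is $g=g_\psi\in G$ depending only on $\psi$ and a density $f_U(u;\gamma)$ with $f_1(y_1;\psi,\gamma)=f_1(y_1;g\gamma)$, $f_0(y_0;\psi,\gamma)=f_0(y_0;g^{-1}\gamma)$ and $f_U(u;\gamma)du=f_1(gu;g\gamma)d(gu)=f_0(g^{-1}u;g^{-1}\gamma)d(g^{-1}u)$; equivalently, with $u_1=g^{-1}y_1$, $u_0=gy_0$, $f_1(y_1;g\gamma)f_0(y_0;g^{-1}\gamma)dy_1dy_0=f_U(u_1;\gamma)f_U(u_0;\gamma)du_1du_0$. Antisymmetry: with conditional log-likelihood $\ell(\psi;\gamma,y_1,y_0)=\log f_1(y_1;g\gamma)+\log f_0(y_0;g^{-1}\gamma)$, the derivative $\nabla_\psi\ell$, expressed in terms of $u_1,u_0$, satisfies $\nabla_\psi\ell(\psi;\gamma,u_1,u_0)=-\nabla_\psi\ell(\psi;\gamma,u_0,u_1)$.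 *)

theory Defs
  imports "HOL-Analysis.Analysis" "HOL-Algebra.Group"
begin

definition strict_concave_on :: "'a::real_vector set \<Rightarrow> ('a \<Rightarrow> real) \<Rightarrow> bool" where
  "strict_concave_on S F \<longleftrightarrow> convex S \<and>
     (\<forall>x\<in>S. \<forall>y\<in>S. x \<noteq> y \<longrightarrow>
        (\<forall>u::real. 0 < u \<and> u < 1 \<longrightarrow> F (u *\<^sub>R x + (1 - u) *\<^sub>R y) > u * F x + (1 - u) * F y))"

definition group_action_on :: "('a, 'b) monoid_scheme \<Rightarrow> 'x set \<Rightarrow> ('a \<Rightarrow> 'x \<Rightarrow> 'x) \<Rightarrow> bool" where
  "group_action_on G X act \<longleftrightarrow>
     (\<forall>g\<in>carrier G. \<forall>x\<in>X. act g x \<in> X) \<and>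
     (\<forall>x\<in>X. act \<one>\<^bsub>G\<^esub> x = x) \<and>
     (\<forall>g\<in>carrier G. \<forall>k\<in>carrier G. \<forall>x\<in>X. act (g \<otimes>\<^bsub>G\<^esub> k) x = act g (act k x))"

definition prob_density :: "'x measure \<Rightarrow> ('x \<Rightarrow> real) \<Rightarrow> bool" where
  "prob_density M p \<longleftrightarrow> p \<in> borel_measurable M \<and> (\<forall>x\<in>space M. 0 \<le> p x)
      \<and> integrable M p \<and> (\<integral>x. p x \<partial>M) = 1"

definition pair_lik ::
  "(real \<Rightarrow> 'g \<Rightarrow> 'y \<Rightarrow> real) \<Rightarrow> (real \<Rightarrow> 'g \<Rightarrow> 'y \<Rightarrow> real) \<Rightarrow> 'g measure
    \<Rightarrow> ('l \<Rightarrow> 'g \<Rightarrow> real) \<Rightarrow> real \<Rightarrow> 'l \<Rightarrow> 'y \<Rightarrow> 'y \<Rightarrow> real" where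
  "pair_lik f1 f0 Gm h psi lam y1 y0 = (\<integral>\<gamma>. f1 psi \<gamma> y1 * f0 psi \<gamma> y0 * h lam \<gamma> \<partial>Gm)"

definition pair_loglik ::
  "(real \<Rightarrow> 'g \<Rightarrow> 'y \<Rightarrow> real) \<Rightarrow> (real \<Rightarrow> 'g \<Rightarrow> 'y \<Rightarrow> real) \<Rightarrow> 'g measure
    \<Rightarrow> ('l \<Rightarrow> 'g \<Rightarrow> real) \<Rightarrow> real \<Rightarrow> 'l \<Rightarrow> 'y \<Rightarrow> 'y \<Rightarrow> real" where
  "pair_loglik f1 f0 Gm h psi lam y1 y0 = ln (pair_lik f1 f0 Gm h psi lam y1 y0)"

definition true_dens ::
  "(real \<Rightarrow> 'g \<Rightarrow> 'y \<Rightarrow> real) \<Rightarrow> (real \<Rightarrow> 'g \<Rightarrow> 'y \<Rightarrow> real) \<Rightarrow> 'g measure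
    \<Rightarrow> ('g \<Rightarrow> real) \<Rightarrow> real \<Rightarrow> 'y \<Rightarrow> 'y \<Rightarrow> real" where
  "true_dens f1 f0 Gm f psis y1 y0 = (\<integral>\<gamma>. f1 psis \<gamma> y1 * f0 psis \<gamma> y0 * f \<gamma> \<partial>Gm)"

definition Em :: "'y measure \<Rightarrow> ('y \<Rightarrow> 'y \<Rightarrow> real) \<Rightarrow> ('y \<Rightarrow> 'y \<Rightarrow> real) \<Rightarrow> real" where
  "Em Ym m phi = (\<integral>z. phi (fst z) (snd z) * m (fst z) (snd z) \<partial>(Ym \<Otimes>\<^sub>M Ym))"

definition Em_integrable :: "'y measure \<Rightarrow> ('y \<Rightarrow> 'y \<Rightarrow> real) \<Rightarrow> ('y \<Rightarrow> 'y \<Rightarrow> real) \<Rightarrow> bool" where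
  "Em_integrable Ym m phi \<longleftrightarrow> integrable (Ym \<Otimes>\<^sub>M Ym) (\<lambda>z. phi (fst z) (snd z) * m (fst z) (snd z))"

definition dpsi :: "(real \<Rightarrow> 'l \<Rightarrow> 'y \<Rightarrow> 'y \<Rightarrow> real) \<Rightarrow> real \<Rightarrow> 'l \<Rightarrow> 'y \<Rightarrow> 'y \<Rightarrow> real" where
  "dpsi L psi lam y1 y0 = deriv (\<lambda>p. L p lam y1 y0) psi"

definition dlam :: "(real \<Rightarrow> 'l::real_normed_vector \<Rightarrow> 'y \<Rightarrow> 'y \<Rightarrow> real) \<Rightarrow> 'l \<Rightarrow> real \<Rightarrow> 'l \<Rightarrow> 'y \<Rightarrow> 'y \<Rightarrow> real" where
  "dlam L b psi lam y1 y0 = deriv (\<lambda>t. L psi (lam + t *\<^sub>R b) y1 y0) 0"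

text \<open>\<open>psi* \<perp>_m \<Lambda>\<close>: \<open>E_m[\<nabla>^2_{\<psi>\<lambda>} \<ell>(psi*,lambda)] = 0\<close> for all lambda in \<Lambda>
  (the vector \<open>\<nabla>^2_{\<psi>\<lambda>}\<close> written out componentwise over the basis).\<close>
definition m_orthogonal ::
  "'y measure \<Rightarrow> ('y \<Rightarrow> 'y \<Rightarrow> real) \<Rightarrow> (real \<Rightarrow> 'l::euclidean_space \<Rightarrow> 'y \<Rightarrow> 'y \<Rightarrow> real) \<Rightarrow> real \<Rightarrow> 'l set \<Rightarrow> bool" where
  "m_orthogonal Ym m L psis Lam \<longleftrightarrow>
     (\<forall>lam\<in>Lam. \<forall>b\<in>Basis. Em Ym m (dlam (dpsi L) b psis lam) = 0)"

definition solves_score ::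
  "'y measure \<Rightarrow> ('y \<Rightarrow> 'y \<Rightarrow> real) \<Rightarrow> (real \<Rightarrow> 'l::euclidean_space \<Rightarrow> 'y \<Rightarrow> 'y \<Rightarrow> real) \<Rightarrow> real \<Rightarrow> 'l \<Rightarrow> bool" where
  "solves_score Ym m L psi0 lam0 \<longleftrightarrow>
     Em Ym m (dpsi L psi0 lam0) = 0 \<and> (\<forall>b\<in>Basis. Em Ym m (dlam L b psi0 lam0) = 0)"

definition cond_score ::
  "(real \<Rightarrow> 'g \<Rightarrow> 'y \<Rightarrow> real) \<Rightarrow> (real \<Rightarrow> 'g \<Rightarrow> 'y \<Rightarrow> real) \<Rightarrow> real \<Rightarrow> 'g \<Rightarrow> 'y \<Rightarrow> 'y \<Rightarrow> real" where
  "cond_score f1 f0 psi \<gamma> y1 y0 = deriv (\<lambda>p. ln (f1 p \<gamma> y1) + ln (f0 p \<gamma> y0)) psi"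

end

theory Submission
  imports Defs
begin

lemma aux_lin: fixes X Y Z Pa Pb :: real shows "-X \<le> -Z - -Pa \<Longrightarrow> -Y \<le> -Z - -Pb \<Longrightarrow> Pa+Pb < 2*Z \<Longrightarrow> 0 < X + Y" by linarith

lemma sc_deriv_gt:
  fixes \<phi> :: "real \<Rightarrow> real"
  assumes sc: "\<forall>x\<in>P. \<forall>y\<in>P. x \<noteq> y \<longrightarrow> (\<forall>u::real. 0 < u \<and> u < 1 \<longrightarrow> \<phi> (u * x + (1 - u) * y) > u * \<phi> x + (1 - u) * \<phi> y)"
    and P: "open P" "convex P" and ab: "a \<in> P" "b \<in> P" "a < b"
    and da: "(\<phi> has_real_derivative da) (at a)" and db: "(\<phi> has_real_derivative db) (at b)"
  shows "da > db"
proof -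
  have cv: "convex_on P (\<lambda>x. - \<phi> x)"
    unfolding convex_on_def
  proof (intro conjI P ballI allI impI)
    fix x y and u v :: real assume xy: "x \<in> P" "y \<in> P" and uv: "0 \<le> u" "0 \<le> v" "u + v = 1"
    show "- \<phi> (u *\<^sub>R x + v *\<^sub>R y) \<le> u * - \<phi> x + v * - \<phi> y"
    proof (cases "x = y \<or> u = 0 \<or> v = 0")
      case True
      then consider "x = y" | "u = 0" | "v = 0" by blast
      then show ?thesis
      proof cases
        case 1
        then have "u *\<^sub>R x + v *\<^sub>R y = x" using 1 uv(3) by (metis scaleR_add_left scaleR_one)
        moreover have "u * - \<phi> x + v * - \<phi> y = (u + v) * - \<phi> x" using 1 by (simp only: distrib_right)
        ultimately show ?thesis using uv by simp
      next
        case 2 then show ?thesis using uv by simp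
      next
        case 3 then show ?thesis using uv by simp
      qed
    next
      case False
      then have "0 < u" "u < 1" "v = 1 - u" using uv by auto
      have "\<phi> (u * x + (1 - u) * y) > u * \<phi> x + (1 - u) * \<phi> y"
        using sc xy False \<open>0 < u\<close> \<open>u < 1\<close> by blast
      then show ?thesis using \<open>v = 1 - u\<close> by simp
    qed
  qed
  have conn: "connected P" using P(2) by (simp add: convex_connected)
  have int: "interior P = P" using P(1) by (simp add: interior_open)
  let ?c = "(a + b) / 2"
  have cP: "?c \<in> P" using P(2) ab unfolding convex_alt
    using convexD[OF P(2) ab(1) ab(2), of "1/2" "1/2"] by (simp add: field_simps)
  have t1: "- \<phi> ?c - - \<phi> a \<ge> - da * (?c - a)"
    by (rule convex_on_imp_above_tangent[OF cv conn]) (use ab int cP in \<open>auto intro!: DERIV_minus has_field_derivative_at_within[OF da]\<close>)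
  have t2: "- \<phi> ?c - - \<phi> b \<ge> - db * (?c - b)"
    by (rule convex_on_imp_above_tangent[OF cv conn]) (use ab int cP in \<open>auto intro!: DERIV_minus has_field_derivative_at_within[OF db]\<close>)
  have "\<phi> (1/2 * a + (1 - 1/2) * b) > 1/2 * \<phi> a + (1 - 1/2) * \<phi> b"
    using sc[rule_format, OF ab(1) ab(2), of "1/2"] ab(3) by simp
  then have "\<phi> a + \<phi> b < 2 * \<phi> ?c" by (simp add: field_simps)
  moreover note aux_lin
  ultimately have "da * ((a+b)/2 - a) + db * ((a+b)/2 - b) > 0" using t1 t2 by (simp only: mult_minus_left)
  moreover have "da * ((a+b)/2 - a) + db * ((a+b)/2 - b) = (da - db) * (b - a) / 2"
    by (simp add: field_simps)
  ultimately have "(da - db) * (b - a) > 0" by simp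
  with ab(3) show ?thesis by (simp add: zero_less_mult_iff)
qed

lemma pos_lik:
  fixes a hl :: "'g \<Rightarrow> real"
  assumes h: "prob_density Gm hl"
    and pos: "\<forall>\<gamma>\<in>space Gm. 0 < a \<gamma>"
    and int: "integrable Gm (\<lambda>\<gamma>. a \<gamma> * hl \<gamma>)"
  shows "(\<integral>\<gamma>. a \<gamma> * hl \<gamma> \<partial>Gm) > 0"
proof -
  have hm: "hl \<in> borel_measurable Gm" and hn: "\<forall>x\<in>space Gm. 0 \<le> hl x" and h1: "(\<integral>x. hl x \<partial>Gm) = 1"
    using h by (auto simp: prob_density_def)
  have nn: "AE x in Gm. 0 \<le> a x * hl x" using pos hn by (intro AE_I2) (simp add: less_imp_le)
  have ge: "(\<integral>\<gamma>. a \<gamma> * hl \<gamma> \<partial>Gm) \<ge> 0" using pos hn by (intro Bochner_Integration.integral_nonneg) (simp add: less_imp_le)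
  show ?thesis
  proof (rule ccontr)
    assume "\<not> ?thesis"
    with ge have "(\<integral>\<gamma>. a \<gamma> * hl \<gamma> \<partial>Gm) = 0" by simp
    with integral_nonneg_eq_0_iff_AE[OF int nn] have "AE x in Gm. a x * hl x = 0" by simp
    then have "AE x in Gm. hl x = 0"
      apply (rule AE_mp) apply (rule AE_I2) using pos by auto
    then have "(\<integral>x. hl x \<partial>Gm) = (\<integral>x. 0 \<partial>Gm)" by (intro integral_cong_AE hm) auto
    with h1 show False by simp
  qed
qed

lemma ln_deriv:
  assumes "(F has_real_derivative D) (at x)" "F x > 0"
  shows "((\<lambda>p. ln (F p)) has_real_derivative D / F x) (at x)"
  using DERIV_chain2[OF DERIV_ln_divide[OF assms(2)] assms(1)] by (simp add: field_simps)

lemma mass: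
  fixes k1 k0 :: "'g \<Rightarrow> 'y \<Rightarrow> real" and f :: "'g \<Rightarrow> real"
  assumes sfY: "sigma_finite_measure Ym" and sfG: "sigma_finite_measure Gm"
    and k1m: "(\<lambda>z. k1 (fst z) (snd z)) \<in> borel_measurable (Gm \<Otimes>\<^sub>M Ym)"
    and k0m: "(\<lambda>z. k0 (fst z) (snd z)) \<in> borel_measurable (Gm \<Otimes>\<^sub>M Ym)"
    and k1d: "\<forall>\<gamma>\<in>space Gm. prob_density Ym (k1 \<gamma>)"
    and k0d: "\<forall>\<gamma>\<in>space Gm. prob_density Ym (k0 \<gamma>)"
    and fd: "prob_density Gm f"
  shows "\<not> (AE z in Ym \<Otimes>\<^sub>M Ym. (\<integral>\<gamma>. k1 \<gamma> (fst z) * k0 \<gamma> (snd z) * f \<gamma> \<partial>Gm) = 0)"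
proof
  assume AE0: "AE z in Ym \<Otimes>\<^sub>M Ym. (\<integral>\<gamma>. k1 \<gamma> (fst z) * k0 \<gamma> (snd z) * f \<gamma> \<partial>Gm) = 0"
  interpret Y: sigma_finite_measure Ym by fact
  interpret G: sigma_finite_measure Gm by fact
  interpret YY: pair_sigma_finite Ym Ym ..
  interpret YYs: sigma_finite_measure "Ym \<Otimes>\<^sub>M Ym" by (rule YY.sigma_finite_measure_axioms)
  interpret P: pair_sigma_finite "Ym \<Otimes>\<^sub>M Ym" Gm ..
  have fm[measurable]: "f \<in> borel_measurable Gm" using fd by (simp add: prob_density_def)
  have fnn: "\<forall>x\<in>space Gm. 0 \<le> f x" using fd by (simp add: prob_density_def)
  have k1m'[measurable]: "(\<lambda>w. k1 (snd w) (fst (fst w))) \<in> borel_measurable ((Ym \<Otimes>\<^sub>M Ym) \<Otimes>\<^sub>M Gm)"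
  proof -
    have "(\<lambda>w. (\<lambda>z. k1 (fst z) (snd z)) ((\<lambda>w. (snd w, fst (fst w))) w)) \<in> borel_measurable ((Ym \<Otimes>\<^sub>M Ym) \<Otimes>\<^sub>M Gm)"
      by (rule measurable_compose[OF _ k1m]) measurable
    then show ?thesis by simp
  qed
  have k0m'[measurable]: "(\<lambda>w. k0 (snd w) (snd (fst w))) \<in> borel_measurable ((Ym \<Otimes>\<^sub>M Ym) \<Otimes>\<^sub>M Gm)"
  proof -
    have "(\<lambda>w. (\<lambda>z. k0 (fst z) (snd z)) ((\<lambda>w. (snd w, snd (fst w))) w)) \<in> borel_measurable ((Ym \<Otimes>\<^sub>M Ym) \<Otimes>\<^sub>M Gm)"
      by (rule measurable_compose[OF _ k0m]) measurable
    then show ?thesis by simp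
  qed
  define K where "K w = ennreal (k1 (snd w) (fst (fst w)) * k0 (snd w) (snd (fst w)) * f (snd w))" for w
  have Km[measurable]: "K \<in> borel_measurable ((Ym \<Otimes>\<^sub>M Ym) \<Otimes>\<^sub>M Gm)" unfolding K_def by measurable
  define I where "I z = (\<integral>\<^sup>+\<gamma>. K (z, \<gamma>) \<partial>Gm)" for z
  have Im[measurable]: "I \<in> borel_measurable (Ym \<Otimes>\<^sub>M Ym)"
    unfolding I_def by (rule G.borel_measurable_nn_integral_fst[OF Km])
  have inner: "(\<integral>\<^sup>+z. K (z, \<gamma>) \<partial>(Ym \<Otimes>\<^sub>M Ym)) = ennreal (f \<gamma>)" if g: "\<gamma> \<in> space Gm" for \<gamma>
  proof -
    have d1: "prob_density Ym (k1 \<gamma>)" and d0: "prob_density Ym (k0 \<gamma>)" using k1d k0d g by auto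
    have n1: "(\<integral>\<^sup>+y. ennreal (k1 \<gamma> y) \<partial>Ym) = 1"
      using d1 by (subst nn_integral_eq_integral) (auto simp: prob_density_def intro!: AE_I2)
    have n0: "(\<integral>\<^sup>+y. ennreal (k0 \<gamma> y) \<partial>Ym) = 1"
      using d0 by (subst nn_integral_eq_integral) (auto simp: prob_density_def intro!: AE_I2)
    have m1[measurable]: "k1 \<gamma> \<in> borel_measurable Ym" and m0[measurable]: "k0 \<gamma> \<in> borel_measurable Ym"
      using d1 d0 by (auto simp: prob_density_def)
    have "(\<integral>\<^sup>+z. K (z, \<gamma>) \<partial>(Ym \<Otimes>\<^sub>M Ym)) =
          (\<integral>\<^sup>+z. ennreal (f \<gamma>) * (ennreal (k1 \<gamma> (fst z)) * ennreal (k0 \<gamma> (snd z))) \<partial>(Ym \<Otimes>\<^sub>M Ym))"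
      using d1 d0 fnn g
      by (intro nn_integral_cong) (auto simp: K_def space_pair_measure prob_density_def ennreal_mult[symmetric] mult_ac)
    also have "\<dots> = ennreal (f \<gamma>) * (\<integral>\<^sup>+z. ennreal (k1 \<gamma> (fst z)) * ennreal (k0 \<gamma> (snd z)) \<partial>(Ym \<Otimes>\<^sub>M Ym))"
      by (rule nn_integral_cmult) measurable
    also have "(\<integral>\<^sup>+z. ennreal (k1 \<gamma> (fst z)) * ennreal (k0 \<gamma> (snd z)) \<partial>(Ym \<Otimes>\<^sub>M Ym))
        = (\<integral>\<^sup>+x. \<integral>\<^sup>+y. ennreal (k1 \<gamma> x) * ennreal (k0 \<gamma> y) \<partial>Ym \<partial>Ym)"
    proof -
      have mm: "(\<lambda>z. ennreal (k1 \<gamma> (fst z)) * ennreal (k0 \<gamma> (snd z))) \<in> borel_measurable (Ym \<Otimes>\<^sub>M Ym)"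
        by (intro borel_measurable_times_ennreal measurable_compose[OF measurable_fst measurable_compose[OF m1 measurable_ennreal]]
              measurable_compose[OF measurable_snd measurable_compose[OF m0 measurable_ennreal]])
      show ?thesis using Y.nn_integral_fst[OF mm] by simp
    qed
    also have "\<dots> = (\<integral>\<^sup>+x. ennreal (k1 \<gamma> x) * 1 \<partial>Ym)"
      by (intro nn_integral_cong) (simp add: nn_integral_cmult n0)
    also have "\<dots> = 1" using n1 by simp
    finally show ?thesis by simp
  qed
  have tot: "(\<integral>\<^sup>+z. I z \<partial>(Ym \<Otimes>\<^sub>M Ym)) = 1"
  proof -
    have "(\<integral>\<^sup>+z. I z \<partial>(Ym \<Otimes>\<^sub>M Ym)) = integral\<^sup>N ((Ym \<Otimes>\<^sub>M Ym) \<Otimes>\<^sub>M Gm) K"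
      unfolding I_def by (rule G.nn_integral_fst[OF Km])
    also have "\<dots> = (\<integral>\<^sup>+\<gamma>. (\<integral>\<^sup>+z. K (z, \<gamma>) \<partial>(Ym \<Otimes>\<^sub>M Ym)) \<partial>Gm)"
      by (rule P.nn_integral_snd[OF Km, symmetric])
    also have "\<dots> = (\<integral>\<^sup>+\<gamma>. ennreal (f \<gamma>) \<partial>Gm)"
      by (intro nn_integral_cong inner)
    also have "\<dots> = 1"
      using fd by (subst nn_integral_eq_integral) (auto simp: prob_density_def intro!: AE_I2)
    finally show ?thesis .
  qed
  have fin: "AE z in Ym \<Otimes>\<^sub>M Ym. I z \<noteq> \<infinity>"
    by (rule nn_integral_PInf_AE[OF Im]) (simp add: tot)
  have "AE z in Ym \<Otimes>\<^sub>M Ym. I z = 0"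
    using AE0 fin
  proof (elim AE_mp, intro AE_I2 impI)
    fix z assume z: "z \<in> space (Ym \<Otimes>\<^sub>M Ym)" and fz: "I z \<noteq> \<infinity>"
      and mz: "(\<integral>\<gamma>. k1 \<gamma> (fst z) * k0 \<gamma> (snd z) * f \<gamma> \<partial>Gm) = 0"
    have z12: "fst z \<in> space Ym" "snd z \<in> space Ym" using z by (auto simp: space_pair_measure)
    have mes: "(\<lambda>\<gamma>. k1 \<gamma> (fst z) * k0 \<gamma> (snd z) * f \<gamma>) \<in> borel_measurable Gm"
      using measurable_Pair2[OF k1m' z] measurable_Pair2[OF k0m' z] by simp
    have nnG: "\<forall>\<gamma>\<in>space Gm. 0 \<le> k1 \<gamma> (fst z) * k0 \<gamma> (snd z) * f \<gamma>"
      using k1d k0d fnn z12 by (auto simp: prob_density_def)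
    have Iz: "I z = (\<integral>\<^sup>+\<gamma>. ennreal (k1 \<gamma> (fst z) * k0 \<gamma> (snd z) * f \<gamma>) \<partial>Gm)"
      by (simp add: I_def K_def)
    have intg: "integrable Gm (\<lambda>\<gamma>. k1 \<gamma> (fst z) * k0 \<gamma> (snd z) * f \<gamma>)"
      using fz nnG by (intro integrableI_nonneg mes AE_I2) (auto simp: Iz top.not_eq_extremum)
    have "I z = ennreal (\<integral>\<gamma>. k1 \<gamma> (fst z) * k0 \<gamma> (snd z) * f \<gamma> \<partial>Gm)"
      unfolding Iz using nnG by (intro nn_integral_eq_integral intg AE_I2) auto
    then show "I z = 0" using mz by simp
  qed
  then have "(\<integral>\<^sup>+z. I z \<partial>(Ym \<Otimes>\<^sub>M Ym)) = (\<integral>\<^sup>+z. 0 \<partial>(Ym \<Otimes>\<^sub>M Ym))"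
    by (intro nn_integral_cong_AE) auto
  with tot show False by simp
qed

lemma swap_zero:
  fixes Phi :: "'y \<times> 'y \<Rightarrow> real" and Ta Tb :: "'y \<Rightarrow> 'y" and Ja Jb :: "'y \<Rightarrow> real"
  assumes sfY: "sigma_finite_measure Ym"
    and T1m[measurable]: "Ta \<in> Ym \<rightarrow>\<^sub>M Ym" and T0m[measurable]: "Tb \<in> Ym \<rightarrow>\<^sub>M Ym"
    and J1m[measurable]: "Ja \<in> borel_measurable Ym" and J1n: "\<forall>u\<in>space Ym. 0 \<le> Ja u"
    and J1d: "distr (density Ym (\<lambda>u. ennreal (Ja u))) Ym Ta = Ym"
    and J0m[measurable]: "Jb \<in> borel_measurable Ym" and J0n: "\<forall>u\<in>space Ym. 0 \<le> Jb u"
    and J0d: "distr (density Ym (\<lambda>u. ennreal (Jb u))) Ym Tb = Ym"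
    and Phi: "integrable (Ym \<Otimes>\<^sub>M Ym) Phi"
    and anti: "\<forall>u1\<in>space Ym. \<forall>u0\<in>space Ym.
       Ja u1 * Jb u0 * Phi (Ta u1, Tb u0) = - (Ja u0 * Jb u1 * Phi (Ta u0, Tb u1))"
  shows "integral\<^sup>L (Ym \<Otimes>\<^sub>M Ym) Phi = 0"
proof -
  interpret Y: sigma_finite_measure Ym by fact
  interpret YY: pair_sigma_finite Ym Ym ..
  have Phim[measurable]: "Phi \<in> borel_measurable (Ym \<Otimes>\<^sub>M Ym)" using Phi by auto
  let ?D1 = "density Ym (\<lambda>u. ennreal (Ja u))" and ?D0 = "density Ym (\<lambda>u. ennreal (Jb u))"
  have sf0: "sigma_finite_measure ?D0"
    by (rule sigma_finite_measure_distr[of _ Ym Tb]) (simp_all add: J0d sfY)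
  have "Ym \<Otimes>\<^sub>M Ym = distr ?D1 Ym Ta \<Otimes>\<^sub>M distr ?D0 Ym Tb" by (simp add: J1d J0d)
  also have "\<dots> = distr (?D1 \<Otimes>\<^sub>M ?D0) (Ym \<Otimes>\<^sub>M Ym) (\<lambda>(x, y). (Ta x, Tb y))"
    by (rule pair_measure_distr) (simp_all add: J0d sfY)
  also have "?D1 \<Otimes>\<^sub>M ?D0 = density (Ym \<Otimes>\<^sub>M Ym) (\<lambda>(x, y). ennreal (Ja x) * ennreal (Jb y))"
    by (rule pair_measure_density) (simp_all add: sfY sf0)
  also have "\<dots> = density (Ym \<Otimes>\<^sub>M Ym) (\<lambda>z. ennreal (Ja (fst z) * Jb (snd z)))"
    using J1n J0n by (intro density_cong AE_I2) (auto simp: space_pair_measure ennreal_mult)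
  finally have eq: "Ym \<Otimes>\<^sub>M Ym = distr (density (Ym \<Otimes>\<^sub>M Ym) (\<lambda>z. ennreal (Ja (fst z) * Jb (snd z)))) (Ym \<Otimes>\<^sub>M Ym) (\<lambda>(x, y). (Ta x, Tb y))" .
  define Psi where "Psi z = Ja (fst z) * Jb (snd z) * Phi (Ta (fst z), Tb (snd z))" for z
  have Psim[measurable]: "Psi \<in> borel_measurable (Ym \<Otimes>\<^sub>M Ym)" unfolding Psi_def by measurable
  have "integral\<^sup>L (Ym \<Otimes>\<^sub>M Ym) Phi = integral\<^sup>L (distr (density (Ym \<Otimes>\<^sub>M Ym) (\<lambda>z. ennreal (Ja (fst z) * Jb (snd z)))) (Ym \<Otimes>\<^sub>M Ym) (\<lambda>(x, y). (Ta x, Tb y))) Phi"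
    by (subst eq[symmetric]) simp
  also have "\<dots> = (\<integral>z. Phi ((\<lambda>(x, y). (Ta x, Tb y)) z) \<partial>density (Ym \<Otimes>\<^sub>M Ym) (\<lambda>z. ennreal (Ja (fst z) * Jb (snd z))))"
    by (rule integral_distr) measurable
  also have "\<dots> = (\<integral>z. (Ja (fst z) * Jb (snd z)) *\<^sub>R Phi ((\<lambda>(x, y). (Ta x, Tb y)) z) \<partial>(Ym \<Otimes>\<^sub>M Ym))"
    using J1n J0n by (intro integral_density) (measurable, auto intro!: AE_I2 simp: space_pair_measure)
  also have "\<dots> = integral\<^sup>L (Ym \<Otimes>\<^sub>M Ym) Psi"
    by (intro Bochner_Integration.integral_cong) (auto simp: Psi_def split: prod.splits)
  finally have I: "integral\<^sup>L (Ym \<Otimes>\<^sub>M Ym) Phi = integral\<^sup>L (Ym \<Otimes>\<^sub>M Ym) Psi" .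
  have "integral\<^sup>L (Ym \<Otimes>\<^sub>M Ym) Psi = (\<integral>(x,y). Psi (y,x) \<partial>(Ym \<Otimes>\<^sub>M Ym))"
    by (rule YY.integral_product_swap[symmetric]) (rule Psim)
  also have "\<dots> = (\<integral>z. - Psi z \<partial>(Ym \<Otimes>\<^sub>M Ym))"
    using anti by (intro Bochner_Integration.integral_cong) (auto simp: Psi_def space_pair_measure)
  also have "\<dots> = - integral\<^sup>L (Ym \<Otimes>\<^sub>M Ym) Psi" by simp
  finally have "integral\<^sup>L (Ym \<Otimes>\<^sub>M Ym) Psi = 0" by simp
  with I show ?thesis by simp
qed

lemma deriv_prod_cs:
  fixes F G :: "real \<Rightarrow> real"
  assumes "F differentiable at x" "G differentiable at x" "F x > 0" "G x > 0"
  shows "deriv (\<lambda>p. F p * G p) x = deriv (\<lambda>p. ln (F p) + ln (G p)) x * (F x * G x)"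
proof -
  have dF: "(F has_real_derivative deriv F x) (at x)" and dG: "(G has_real_derivative deriv G x) (at x)"
    using assms(1,2) by (simp_all add: DERIV_deriv_iff_real_differentiable)
  have "deriv (\<lambda>p. F p * G p) x = deriv F x * G x + deriv G x * F x"
    by (rule DERIV_imp_deriv) (rule DERIV_mult[OF dF dG])
  moreover have "deriv (\<lambda>p. ln (F p) + ln (G p)) x = deriv F x / F x + deriv G x / G x"
    by (rule DERIV_imp_deriv) (rule DERIV_add[OF ln_deriv[OF dF assms(3)] ln_deriv[OF dG assms(4)]])
  ultimately show ?thesis using assms(3,4) by (simp add: field_simps)
qed

theorem proposition5:
  fixes G :: "'a::topological_space monoid"
    and actY :: "'a \<Rightarrow> 'y::topological_space \<Rightarrow> 'y"
    and actG :: "'a \<Rightarrow> 'g::topological_space \<Rightarrow> 'g"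
    and Ym :: "'y measure" and Gm :: "'g measure"
    and f1 f0 :: "real \<Rightarrow> 'g \<Rightarrow> 'y \<Rightarrow> real"
    and F1 F0 fU :: "'g \<Rightarrow> 'y \<Rightarrow> real"
    and gpsi :: "real \<Rightarrow> 'a"
    and Jac :: "'a \<Rightarrow> 'y \<Rightarrow> real"
    and f :: "'g \<Rightarrow> real"
    and h :: "'l::euclidean_space \<Rightarrow> 'g \<Rightarrow> real"
    and Psi :: "real set" and Lam :: "'l set" and psis :: real
  assumes sfY: "sigma_finite_measure Ym" and sfG: "sigma_finite_measure Gm"
    \<comment> \<open>transformation model\<close>
    and grp: "group G"
    and actY_act: "group_action_on G (space Ym) actY"
    and actG_act: "group_action_on G (space Gm) actG"
    and actY_cont: "continuous_on (carrier G \<times> space Ym) (\<lambda>(g, y). actY g y)"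
    and actG_cont: "continuous_on (carrier G \<times> space Gm) (\<lambda>(g, \<gamma>). actG g \<gamma>)"
    and actY_meas: "\<forall>g\<in>carrier G. actY g \<in> Ym \<rightarrow>\<^sub>M Ym"
    and actG_meas: "\<forall>g\<in>carrier G. actG g \<in> Gm \<rightarrow>\<^sub>M Gm"
    and F1_dens: "\<forall>\<gamma>\<in>space Gm. prob_density Ym (F1 \<gamma>) \<and> (\<forall>y\<in>space Ym. 0 < F1 \<gamma> y)"
    and F0_dens: "\<forall>\<gamma>\<in>space Gm. prob_density Ym (F0 \<gamma>) \<and> (\<forall>y\<in>space Ym. 0 < F0 \<gamma> y)"
    and F1_meas: "(\<lambda>z. F1 (fst z) (snd z)) \<in> borel_measurable (Gm \<Otimes>\<^sub>M Ym)"
    and F0_meas: "(\<lambda>z. F0 (fst z) (snd z)) \<in> borel_measurable (Gm \<Otimes>\<^sub>M Ym)"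
    and F1_transf: "\<forall>g\<in>carrier G. \<forall>\<gamma>\<in>space Gm.
          distr (density Ym (\<lambda>y. ennreal (F1 \<gamma> y))) Ym (actY g)
            = density Ym (\<lambda>y. ennreal (F1 (actG g \<gamma>) y))"
    and F0_transf: "\<forall>g\<in>carrier G. \<forall>\<gamma>\<in>space Gm.
          distr (density Ym (\<lambda>y. ennreal (F0 \<gamma> y))) Ym (actY g)
            = density Ym (\<lambda>y. ennreal (F0 (actG g \<gamma>) y))"
    \<comment> \<open>parameter spaces, true mixing density f, assumed mixing model h\<close>
    and Psi: "open Psi" "convex Psi" "psis \<in> Psi"
    and Lam: "open Lam" "convex Lam"
    and f_dens: "prob_density Gm f"
    and h_dens: "\<forall>lam\<in>Lam. prob_density Gm (h lam)"
    \<comment> \<open>symmetric parametrization\<close>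
    and gpsi_G: "\<forall>psi\<in>Psi. gpsi psi \<in> carrier G"
    and sym_par: "\<forall>psi\<in>Psi. \<forall>\<gamma>\<in>space Gm. \<forall>y\<in>space Ym.
          f1 psi \<gamma> y = F1 (actG (gpsi psi) \<gamma>) y \<and>
          f0 psi \<gamma> y = F0 (actG (inv\<^bsub>G\<^esub> (gpsi psi)) \<gamma>) y"
    and Jac: "\<forall>psi\<in>Psi. \<forall>g\<in>{gpsi psi, inv\<^bsub>G\<^esub> (gpsi psi)}.
          Jac g \<in> borel_measurable Ym \<and> (\<forall>u\<in>space Ym. 0 \<le> Jac g u) \<and>
          distr (density Ym (\<lambda>u. ennreal (Jac g u))) Ym (actY g) = Ym"
    and fU: "\<forall>psi\<in>Psi. \<forall>\<gamma>\<in>space Gm. \<forall>u\<in>space Ym.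
          fU \<gamma> u = F1 (actG (gpsi psi) \<gamma>) (actY (gpsi psi) u) * Jac (gpsi psi) u \<and>
          fU \<gamma> u = F0 (actG (inv\<^bsub>G\<^esub> (gpsi psi)) \<gamma>) (actY (inv\<^bsub>G\<^esub> (gpsi psi)) u)
                      * Jac (inv\<^bsub>G\<^esub> (gpsi psi)) u"
    \<comment> \<open>antisymmetry of the conditional score, expressed in u1, u0\<close>
    and antisym: "\<forall>psi\<in>Psi. \<forall>\<gamma>\<in>space Gm. \<forall>u1\<in>space Ym. \<forall>u0\<in>space Ym.
          cond_score f1 f0 psi \<gamma> (actY (gpsi psi) u1) (actY (inv\<^bsub>G\<^esub> (gpsi psi)) u0)
            = - cond_score f1 f0 psi \<gamma> (actY (gpsi psi) u0) (actY (inv\<^bsub>G\<^esub> (gpsi psi)) u1)"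
    \<comment> \<open>strict concavity of the log-likelihood contribution\<close>
    and concave: "\<forall>y1\<in>space Ym. \<forall>y0\<in>space Ym.
          strict_concave_on (Psi \<times> Lam) (\<lambda>(p, lam). pair_loglik f1 f0 Gm h p lam y1 y0)"
    \<comment> \<open>standing regularity: differentiability, integrability, differentiation under the integral\<close>
    and f_diff: "\<forall>psi\<in>Psi. \<forall>\<gamma>\<in>space Gm. \<forall>y\<in>space Ym.
          (\<lambda>p. f1 p \<gamma> y) differentiable (at psi) \<and> (\<lambda>p. f0 p \<gamma> y) differentiable (at psi)"
    and lik_int: "\<forall>psi\<in>Psi. \<forall>lam\<in>Lam. \<forall>y1\<in>space Ym. \<forall>y0\<in>space Ym.
          integrable Gm (\<lambda>\<gamma>. f1 psi \<gamma> y1 * f0 psi \<gamma> y0 * h lam \<gamma>)"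
    and lik_deriv: "\<forall>psi\<in>Psi. \<forall>lam\<in>Lam. \<forall>y1\<in>space Ym. \<forall>y0\<in>space Ym.
          ((\<lambda>p. pair_lik f1 f0 Gm h p lam y1 y0) has_real_derivative
             (\<integral>\<gamma>. deriv (\<lambda>p. f1 p \<gamma> y1 * f0 p \<gamma> y0) psi * h lam \<gamma> \<partial>Gm)) (at psi)"
    and Em_int: "\<forall>psi\<in>Psi. \<forall>lam\<in>Lam.
          Em_integrable Ym (true_dens f1 f0 Gm f psis) (pair_loglik f1 f0 Gm h psi lam) \<and>
          Em_integrable Ym (true_dens f1 f0 Gm f psis) (dpsi (pair_loglik f1 f0 Gm h) psi lam) \<and>
          (\<forall>b\<in>Basis. Em_integrable Ym (true_dens f1 f0 Gm f psis) (dlam (pair_loglik f1 f0 Gm h) b psi lam))"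
    and Em_mixed: "\<forall>lam\<in>Lam. \<forall>b\<in>Basis.
          ((\<lambda>t. Em Ym (true_dens f1 f0 Gm f psis) (dpsi (pair_loglik f1 f0 Gm h) psis (lam + t *\<^sub>R b)))
             has_real_derivative
             Em Ym (true_dens f1 f0 Gm f psis) (dlam (dpsi (pair_loglik f1 f0 Gm h)) b psis lam)) (at 0)"
  shows "m_orthogonal Ym (true_dens f1 f0 Gm f psis) (pair_loglik f1 f0 Gm h) psis Lam
     \<and> (\<forall>lam\<in>Lam.
          Em Ym (true_dens f1 f0 Gm f psis) (dpsi (pair_loglik f1 f0 Gm h) psis lam) = 0 \<and>
          (\<integral>y0. (\<integral>y1. dpsi (pair_loglik f1 f0 Gm h) psis lam y1 y0 * true_dens f1 f0 Gm f psis y1 y0 \<partial>Ym) \<partial>Ym) = 0)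
     \<and> (\<forall>psi0\<in>Psi. \<forall>lam0\<in>Lam.
          solves_score Ym (true_dens f1 f0 Gm f psis) (pair_loglik f1 f0 Gm h) psi0 lam0 \<longrightarrow> psi0 = psis)"
proof -
  define m where "m = true_dens f1 f0 Gm f psis"
  define L where "L = pair_loglik f1 f0 Gm h"
  interpret Y: sigma_finite_measure Ym by (rule sfY)
  interpret YY: pair_sigma_finite Ym Ym ..
  have actY_sp: "\<And>g y. g \<in> carrier G \<Longrightarrow> y \<in> space Ym \<Longrightarrow> actY g y \<in> space Ym"
    using actY_act by (auto simp: group_action_on_def)
  have actG_sp: "\<And>g y. g \<in> carrier G \<Longrightarrow> y \<in> space Gm \<Longrightarrow> actG g y \<in> space Gm"
    using actG_act by (auto simp: group_action_on_def)
  have gG: "\<And>psi. psi \<in> Psi \<Longrightarrow> gpsi psi \<in> carrier G" using gpsi_G by auto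
  have giG: "\<And>psi. psi \<in> Psi \<Longrightarrow> inv\<^bsub>G\<^esub> (gpsi psi) \<in> carrier G"
    using gpsi_G group.inv_closed[OF grp] by auto
  have F1pos: "\<And>\<gamma> y. \<gamma> \<in> space Gm \<Longrightarrow> y \<in> space Ym \<Longrightarrow> 0 < F1 \<gamma> y" using F1_dens by auto
  have F0pos: "\<And>\<gamma> y. \<gamma> \<in> space Gm \<Longrightarrow> y \<in> space Ym \<Longrightarrow> 0 < F0 \<gamma> y" using F0_dens by auto
  have f1pos: "\<And>psi \<gamma> y. psi \<in> Psi \<Longrightarrow> \<gamma> \<in> space Gm \<Longrightarrow> y \<in> space Ym \<Longrightarrow> 0 < f1 psi \<gamma> y"
    using sym_par F1pos actG_sp gG by metis
  have f0pos: "\<And>psi \<gamma> y. psi \<in> Psi \<Longrightarrow> \<gamma> \<in> space Gm \<Longrightarrow> y \<in> space Ym \<Longrightarrow> 0 < f0 psi \<gamma> y"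
    using sym_par F0pos actG_sp giG by metis
  have fnn: "\<And>\<gamma>. \<gamma> \<in> space Gm \<Longrightarrow> 0 \<le> f \<gamma>" using f_dens by (auto simp: prob_density_def)
  have hnn: "\<And>lam \<gamma>. lam \<in> Lam \<Longrightarrow> \<gamma> \<in> space Gm \<Longrightarrow> 0 \<le> h lam \<gamma>" using h_dens by (auto simp: prob_density_def)
  define Dn where "Dn psi lam y1 y0 = (\<integral>\<gamma>. deriv (\<lambda>p. f1 p \<gamma> y1 * f0 p \<gamma> y0) psi * h lam \<gamma> \<partial>Gm)" for psi lam y1 y0
  have Ppos: "pair_lik f1 f0 Gm h psi lam y1 y0 > 0"
    if "psi \<in> Psi" "lam \<in> Lam" "y1 \<in> space Ym" "y0 \<in> space Ym" for psi lam y1 y0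
    unfolding pair_lik_def
    by (rule pos_lik[where a = "\<lambda>\<gamma>. f1 psi \<gamma> y1 * f0 psi \<gamma> y0"])
       (use that h_dens lik_int f1pos f0pos in auto)
  have hasD: "((\<lambda>p. L p lam y1 y0) has_real_derivative Dn psi lam y1 y0 / pair_lik f1 f0 Gm h psi lam y1 y0) (at psi)"
    if "psi \<in> Psi" "lam \<in> Lam" "y1 \<in> space Ym" "y0 \<in> space Ym" for psi lam y1 y0
    unfolding L_def pair_loglik_def Dn_def
    by (rule ln_deriv) (use lik_deriv that Ppos in auto)
  have dpsi_eq: "dpsi L psi lam y1 y0 = Dn psi lam y1 y0 / pair_lik f1 f0 Gm h psi lam y1 y0"
    if "psi \<in> Psi" "lam \<in> Lam" "y1 \<in> space Ym" "y0 \<in> space Ym" for psi lam y1 y0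
    unfolding dpsi_def by (rule DERIV_imp_deriv[OF hasD[OF that]])
  have score0: "Em Ym m (dpsi L psis lam) = 0" if lam: "lam \<in> Lam" for lam
  proof -
    let ?g = "gpsi psis" and ?gi = "inv\<^bsub>G\<^esub> (gpsi psis)"
    have g: "?g \<in> carrier G" and gi: "?gi \<in> carrier G" using gG giG Psi(3) by auto
    define S where "S v1 v0 = (\<integral>\<gamma>. fU \<gamma> v1 * fU \<gamma> v0 * f \<gamma> \<partial>Gm)" for v1 v0
    define B where "B v1 v0 = (\<integral>\<gamma>. fU \<gamma> v1 * fU \<gamma> v0 * h lam \<gamma> \<partial>Gm)" for v1 v0
    define A where "A v1 v0 = (\<integral>\<gamma>. cond_score f1 f0 psis \<gamma> (actY ?g v1) (actY ?gi v0) * (fU \<gamma> v1 * fU \<gamma> v0 * h lam \<gamma>) \<partial>Gm)" for v1 v0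
    have fU1: "fU \<gamma> v = F1 (actG ?g \<gamma>) (actY ?g v) * Jac ?g v" if "\<gamma> \<in> space Gm" "v \<in> space Ym" for \<gamma> v
      using fU Psi(3) that by blast
    have fU0: "fU \<gamma> v = F0 (actG ?gi \<gamma>) (actY ?gi v) * Jac ?gi v" if "\<gamma> \<in> space Gm" "v \<in> space Ym" for \<gamma> v
      using fU Psi(3) that by blast
    have sp1: "f1 psis \<gamma> y = F1 (actG ?g \<gamma>) y" if "\<gamma> \<in> space Gm" "y \<in> space Ym" for \<gamma> y
      using sym_par Psi(3) that by blast
    have sp0: "f0 psis \<gamma> y = F0 (actG ?gi \<gamma>) y" if "\<gamma> \<in> space Gm" "y \<in> space Ym" for \<gamma> y
      using sym_par Psi(3) that by blast
    have mS: "Jac ?g v1 * Jac ?gi v0 * m (actY ?g v1) (actY ?gi v0) = S v1 v0"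
      if v: "v1 \<in> space Ym" "v0 \<in> space Ym" for v1 v0
    proof -
      have "Jac ?g v1 * Jac ?gi v0 * m (actY ?g v1) (actY ?gi v0)
          = (\<integral>\<gamma>. Jac ?g v1 * Jac ?gi v0 * (f1 psis \<gamma> (actY ?g v1) * f0 psis \<gamma> (actY ?gi v0) * f \<gamma>) \<partial>Gm)"
        by (simp add: m_def true_dens_def)
      also have "\<dots> = S v1 v0" unfolding S_def
      proof (intro Bochner_Integration.integral_cong refl)
        fix \<gamma> assume ga: "\<gamma> \<in> space Gm"
        then show "Jac ?g v1 * Jac ?gi v0 * (f1 psis \<gamma> (actY ?g v1) * f0 psis \<gamma> (actY ?gi v0) * f \<gamma>) = fU \<gamma> v1 * fU \<gamma> v0 * f \<gamma>"
          using v actY_sp[OF g] actY_sp[OF gi] by (simp add: sp1 sp0 fU1[OF ga v(1)] fU0[OF ga v(2)] mult_ac)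
      qed
      finally show ?thesis .
    qed
    have PB: "Jac ?g v1 * Jac ?gi v0 * pair_lik f1 f0 Gm h psis lam (actY ?g v1) (actY ?gi v0) = B v1 v0"
      if v: "v1 \<in> space Ym" "v0 \<in> space Ym" for v1 v0
    proof -
      have "Jac ?g v1 * Jac ?gi v0 * pair_lik f1 f0 Gm h psis lam (actY ?g v1) (actY ?gi v0)
          = (\<integral>\<gamma>. Jac ?g v1 * Jac ?gi v0 * (f1 psis \<gamma> (actY ?g v1) * f0 psis \<gamma> (actY ?gi v0) * h lam \<gamma>) \<partial>Gm)"
        by (simp add: pair_lik_def)
      also have "\<dots> = B v1 v0" unfolding B_def
      proof (intro Bochner_Integration.integral_cong refl)
        fix \<gamma> assume ga: "\<gamma> \<in> space Gm"
        then show "Jac ?g v1 * Jac ?gi v0 * (f1 psis \<gamma> (actY ?g v1) * f0 psis \<gamma> (actY ?gi v0) * h lam \<gamma>) = fU \<gamma> v1 * fU \<gamma> v0 * h lam \<gamma>"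
          using v actY_sp[OF g] actY_sp[OF gi] by (simp add: sp1 sp0 fU1[OF ga v(1)] fU0[OF ga v(2)] mult_ac)
      qed
      finally show ?thesis .
    qed
    have DA: "Jac ?g v1 * Jac ?gi v0 * Dn psis lam (actY ?g v1) (actY ?gi v0) = A v1 v0"
      if v: "v1 \<in> space Ym" "v0 \<in> space Ym" for v1 v0
    proof -
      have y: "actY ?g v1 \<in> space Ym" "actY ?gi v0 \<in> space Ym" using v actY_sp[OF g] actY_sp[OF gi] by auto
      have "Jac ?g v1 * Jac ?gi v0 * Dn psis lam (actY ?g v1) (actY ?gi v0)
          = (\<integral>\<gamma>. Jac ?g v1 * Jac ?gi v0 * (deriv (\<lambda>p. f1 p \<gamma> (actY ?g v1) * f0 p \<gamma> (actY ?gi v0)) psis * h lam \<gamma>) \<partial>Gm)"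
        by (simp add: Dn_def)
      also have "\<dots> = A v1 v0" unfolding A_def
      proof (intro Bochner_Integration.integral_cong refl)
        fix \<gamma> assume ga: "\<gamma> \<in> space Gm"
        have "deriv (\<lambda>p. f1 p \<gamma> (actY ?g v1) * f0 p \<gamma> (actY ?gi v0)) psis
            = cond_score f1 f0 psis \<gamma> (actY ?g v1) (actY ?gi v0) * (f1 psis \<gamma> (actY ?g v1) * f0 psis \<gamma> (actY ?gi v0))"
          unfolding cond_score_def
          by (rule deriv_prod_cs) (use f_diff Psi(3) ga y f1pos f0pos in auto)
        then show "Jac ?g v1 * Jac ?gi v0 * (deriv (\<lambda>p. f1 p \<gamma> (actY ?g v1) * f0 p \<gamma> (actY ?gi v0)) psis * h lam \<gamma>)
            = cond_score f1 f0 psis \<gamma> (actY ?g v1) (actY ?gi v0) * (fU \<gamma> v1 * fU \<gamma> v0 * h lam \<gamma>)"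
          using v ga y by (simp add: sp1 sp0 fU1[OF ga v(1)] fU0[OF ga v(2)] mult_ac)
      qed
      finally show ?thesis .
    qed
    have dB: "dpsi L psis lam (actY ?g v1) (actY ?gi v0) = A v1 v0 / B v1 v0"
      if v: "v1 \<in> space Ym" "v0 \<in> space Ym" and c: "Jac ?g v1 * Jac ?gi v0 \<noteq> 0" for v1 v0
    proof -
      have y: "actY ?g v1 \<in> space Ym" "actY ?gi v0 \<in> space Ym" using v actY_sp[OF g] actY_sp[OF gi] by auto
      have "dpsi L psis lam (actY ?g v1) (actY ?gi v0)
          = Dn psis lam (actY ?g v1) (actY ?gi v0) / pair_lik f1 f0 Gm h psis lam (actY ?g v1) (actY ?gi v0)"
        by (rule dpsi_eq[OF Psi(3) lam y])
      also have "\<dots> = (Jac ?g v1 * Jac ?gi v0 * Dn psis lam (actY ?g v1) (actY ?gi v0))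
           / (Jac ?g v1 * Jac ?gi v0 * pair_lik f1 f0 Gm h psis lam (actY ?g v1) (actY ?gi v0))"
        using c by simp
      also have "\<dots> = A v1 v0 / B v1 v0" using DA[OF v] PB[OF v] by simp
      finally show ?thesis .
    qed
    have Ssym: "S v1 v0 = S v0 v1" for v1 v0 unfolding S_def by (simp add: mult_ac)
    have Bsym: "B v1 v0 = B v0 v1" for v1 v0 unfolding B_def by (simp add: mult_ac)
    have Aanti: "A v1 v0 = - A v0 v1" if v: "v1 \<in> space Ym" "v0 \<in> space Ym" for v1 v0
    proof -
      have "A v1 v0 = (\<integral>\<gamma>. - (cond_score f1 f0 psis \<gamma> (actY ?g v0) (actY ?gi v1) * (fU \<gamma> v0 * fU \<gamma> v1 * h lam \<gamma>)) \<partial>Gm)"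
        unfolding A_def
      proof (intro Bochner_Integration.integral_cong refl)
        fix \<gamma> assume ga: "\<gamma> \<in> space Gm"
        have "cond_score f1 f0 psis \<gamma> (actY ?g v1) (actY ?gi v0) = - cond_score f1 f0 psis \<gamma> (actY ?g v0) (actY ?gi v1)"
          using antisym Psi(3) ga v by blast
        then show "cond_score f1 f0 psis \<gamma> (actY ?g v1) (actY ?gi v0) * (fU \<gamma> v1 * fU \<gamma> v0 * h lam \<gamma>)
            = - (cond_score f1 f0 psis \<gamma> (actY ?g v0) (actY ?gi v1) * (fU \<gamma> v0 * fU \<gamma> v1 * h lam \<gamma>))"
          by (simp add: mult_ac)
      qed
      also have "\<dots> = - A v0 v1" by (simp add: A_def)
      finally show ?thesis .
    qed
    have Snz: "Jac ?g v \<noteq> 0 \<and> Jac ?gi v \<noteq> 0 \<and> Jac ?g w \<noteq> 0 \<and> Jac ?gi w \<noteq> 0"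
      if v: "v \<in> space Ym" "w \<in> space Ym" and S: "S v w \<noteq> 0" for v w
    proof -
      obtain \<gamma> where ga: "\<gamma> \<in> space Gm" and nz: "fU \<gamma> v * fU \<gamma> w * f \<gamma> \<noteq> 0"
      proof (rule ccontr)
        assume "\<not> thesis"
        with that have "\<forall>\<gamma>\<in>space Gm. fU \<gamma> v * fU \<gamma> w * f \<gamma> = 0" by blast
        then have "S v w = (\<integral>\<gamma>. 0 \<partial>Gm)" unfolding S_def by (intro Bochner_Integration.integral_cong) auto
        with S show False by simp
      qed
      from nz have "fU \<gamma> v \<noteq> 0" "fU \<gamma> w \<noteq> 0" by auto
      then show ?thesis using fU1[OF ga v(1)] fU0[OF ga v(1)] fU1[OF ga v(2)] fU0[OF ga v(2)] by auto
    qed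
    have Jg: "\<forall>g\<in>{?g, ?gi}. Jac g \<in> borel_measurable Ym \<and> (\<forall>u\<in>space Ym. 0 \<le> Jac g u) \<and>
          distr (density Ym (\<lambda>u. ennreal (Jac g u))) Ym (actY g) = Ym"
      using Jac Psi(3) by blast
    show ?thesis
      unfolding Em_def
    proof (rule swap_zero[OF sfY, where Ta = "actY ?g" and Tb = "actY ?gi" and Ja = "Jac ?g" and Jb = "Jac ?gi"])
      show "actY ?g \<in> Ym \<rightarrow>\<^sub>M Ym" "actY ?gi \<in> Ym \<rightarrow>\<^sub>M Ym" using actY_meas g gi by auto
      show "Jac ?g \<in> borel_measurable Ym" "\<forall>u\<in>space Ym. 0 \<le> Jac ?g u"
        "distr (density Ym (\<lambda>u. ennreal (Jac ?g u))) Ym (actY ?g) = Ym"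
        "Jac ?gi \<in> borel_measurable Ym" "\<forall>u\<in>space Ym. 0 \<le> Jac ?gi u"
        "distr (density Ym (\<lambda>u. ennreal (Jac ?gi u))) Ym (actY ?gi) = Ym"
        using Jg by auto
      show "integrable (Ym \<Otimes>\<^sub>M Ym) (\<lambda>z. dpsi L psis lam (fst z) (snd z) * m (fst z) (snd z))"
        using Em_int Psi(3) lam unfolding Em_integrable_def m_def L_def by blast
      show "\<forall>u1\<in>space Ym. \<forall>u0\<in>space Ym.
         Jac ?g u1 * Jac ?gi u0 * (dpsi L psis lam (fst (actY ?g u1, actY ?gi u0)) (snd (actY ?g u1, actY ?gi u0)) * m (fst (actY ?g u1, actY ?gi u0)) (snd (actY ?g u1, actY ?gi u0)))
         = - (Jac ?g u0 * Jac ?gi u1 * (dpsi L psis lam (fst (actY ?g u0, actY ?gi u1)) (snd (actY ?g u0, actY ?gi u1)) * m (fst (actY ?g u0, actY ?gi u1)) (snd (actY ?g u0, actY ?gi u1))))"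
      proof (intro ballI, unfold fst_conv snd_conv)
        fix u1 u0 assume u: "u1 \<in> space Ym" "u0 \<in> space Ym"
        have L1: "Jac ?g u1 * Jac ?gi u0 * (dpsi L psis lam (actY ?g u1) (actY ?gi u0) * m (actY ?g u1) (actY ?gi u0))
            = S u1 u0 * dpsi L psis lam (actY ?g u1) (actY ?gi u0)"
          using mS[OF u] by (simp add: mult_ac)
        have L2: "Jac ?g u0 * Jac ?gi u1 * (dpsi L psis lam (actY ?g u0) (actY ?gi u1) * m (actY ?g u0) (actY ?gi u1))
            = S u0 u1 * dpsi L psis lam (actY ?g u0) (actY ?gi u1)"
          using mS[OF u(2) u(1)] by (simp add: mult_ac)
        show "Jac ?g u1 * Jac ?gi u0 * (dpsi L psis lam (actY ?g u1) (actY ?gi u0) * m (actY ?g u1) (actY ?gi u0))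
            = - (Jac ?g u0 * Jac ?gi u1 * (dpsi L psis lam (actY ?g u0) (actY ?gi u1) * m (actY ?g u0) (actY ?gi u1)))"
        proof (cases "S u1 u0 = 0")
          case True
          then show ?thesis unfolding L1 L2 using Ssym[of u1 u0] by simp
        next
          case False
          have J: "Jac ?g u1 \<noteq> 0" "Jac ?gi u1 \<noteq> 0" "Jac ?g u0 \<noteq> 0" "Jac ?gi u0 \<noteq> 0"
            using Snz[OF u False] by auto
          have d1: "dpsi L psis lam (actY ?g u1) (actY ?gi u0) = A u1 u0 / B u1 u0"
            by (rule dB[OF u]) (use J in simp)
          have d2: "dpsi L psis lam (actY ?g u0) (actY ?gi u1) = A u0 u1 / B u0 u1"
            by (rule dB[OF u(2) u(1)]) (use J in simp)
          show ?thesis unfolding L1 L2 unfolding d1 d2 using Ssym[of u1 u0] Bsym[of u1 u0] Aanti[OF u] by simp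
        qed
      qed
    qed
  qed
  have orth: "m_orthogonal Ym m L psis Lam"
    unfolding m_orthogonal_def
  proof (intro ballI)
    fix lam and b :: 'l assume lam: "lam \<in> Lam" and b: "b \<in> Basis"
    define E where "E t = Em Ym m (dpsi L psis (lam + t *\<^sub>R b))" for t
    have d: "(E has_real_derivative Em Ym m (dlam (dpsi L) b psis lam)) (at 0)"
      using Em_mixed lam b unfolding E_def m_def L_def by blast
    define S where "S = (\<lambda>t::real. lam + t *\<^sub>R b) -` Lam"
    have "continuous_on UNIV (\<lambda>t::real. lam + t *\<^sub>R b)" by (intro continuous_intros)
    then have So: "open S"
      using continuous_on_open_vimage[of UNIV "\<lambda>t::real. lam + t *\<^sub>R b"] Lam(1) unfolding S_def by simp
    have S0: "0 \<in> S" using lam by (simp add: S_def)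
    have "(E has_real_derivative 0) (at 0)"
      by (rule has_field_derivative_transform_within_open[OF DERIV_const So S0])
         (simp add: E_def S_def score0)
    with d show "Em Ym m (dlam (dpsi L) b psis lam) = 0" using DERIV_unique by blast
  qed
  have iter: "(\<integral>y0. (\<integral>y1. dpsi L psis lam y1 y0 * m y1 y0 \<partial>Ym) \<partial>Ym) = 0" if lam: "lam \<in> Lam" for lam
  proof -
    have "integrable (Ym \<Otimes>\<^sub>M Ym) (\<lambda>z. dpsi L psis lam (fst z) (snd z) * m (fst z) (snd z))"
      using Em_int Psi(3) lam unfolding Em_integrable_def m_def L_def by blast
    then have "integrable (Ym \<Otimes>\<^sub>M Ym) (case_prod (\<lambda>y1 y0. dpsi L psis lam y1 y0 * m y1 y0))"
      by (simp add: split_beta')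
    from YY.integral_snd[OF this] score0[OF lam] show ?thesis
      by (simp add: Em_def split_beta')
  qed
  have key: False if ab: "a \<in> Psi" "b \<in> Psi" "a < b" and lam0: "lam0 \<in> Lam"
      and Ea: "Em Ym m (dpsi L a lam0) = 0" and Eb: "Em Ym m (dpsi L b lam0) = 0" for a b lam0
  proof -
    have gt: "dpsi L a lam0 y1 y0 > dpsi L b lam0 y1 y0" if y: "y1 \<in> space Ym" "y0 \<in> space Ym" for y1 y0
    proof (rule sc_deriv_gt[where \<phi> = "\<lambda>p. L p lam0 y1 y0" and P = Psi])
      have sc: "strict_concave_on (Psi \<times> Lam) (\<lambda>(p, lam). L p lam y1 y0)"
        using concave y unfolding L_def by blast
      then have sc': "\<forall>p\<in>Psi \<times> Lam. \<forall>q\<in>Psi \<times> Lam. p \<noteq> q \<longrightarrow> (\<forall>u::real. 0 < u \<and> u < 1 \<longrightarrow>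
          (\<lambda>(p, lam). L p lam y1 y0) (u *\<^sub>R p + (1 - u) *\<^sub>R q) > u * (\<lambda>(p, lam). L p lam y1 y0) p + (1 - u) * (\<lambda>(p, lam). L p lam y1 y0) q)"
        by (simp add: strict_concave_on_def)
      show "\<forall>x\<in>Psi. \<forall>y\<in>Psi. x \<noteq> y \<longrightarrow> (\<forall>u::real. 0 < u \<and> u < 1 \<longrightarrow>
              (\<lambda>p. L p lam0 y1 y0) (u * x + (1 - u) * y) > u * (\<lambda>p. L p lam0 y1 y0) x + (1 - u) * (\<lambda>p. L p lam0 y1 y0) y)"
      proof (intro ballI impI allI)
        fix x y and u :: real assume xy: "x \<in> Psi" "y \<in> Psi" "x \<noteq> y" and u: "0 < u \<and> u < 1"
        have eq: "u *\<^sub>R lam0 + (1 - u) *\<^sub>R lam0 = lam0"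
        proof -
          have "u *\<^sub>R lam0 + (1 - u) *\<^sub>R lam0 = (u + (1 - u)) *\<^sub>R lam0" by (simp only: scaleR_add_left)
          then show ?thesis by simp
        qed
        have "(\<lambda>(p, lam). L p lam y1 y0) (u *\<^sub>R (x, lam0) + (1 - u) *\<^sub>R (y, lam0))
              > u * (\<lambda>(p, lam). L p lam y1 y0) (x, lam0) + (1 - u) * (\<lambda>(p, lam). L p lam y1 y0) (y, lam0)"
          using sc'[rule_format, of "(x, lam0)" "(y, lam0)" u] xy lam0 u by auto
        then show "(\<lambda>p. L p lam0 y1 y0) (u * x + (1 - u) * y) > u * (\<lambda>p. L p lam0 y1 y0) x + (1 - u) * (\<lambda>p. L p lam0 y1 y0) y"
          using eq by simp
      qed
      show "open Psi" "convex Psi" by (rule Psi(1), rule Psi(2))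
      show "a \<in> Psi" "b \<in> Psi" "a < b" by (rule ab)+
      show "((\<lambda>p. L p lam0 y1 y0) has_real_derivative dpsi L a lam0 y1 y0) (at a)"
        using hasD[OF ab(1) lam0 y] dpsi_eq[OF ab(1) lam0 y] by simp
      show "((\<lambda>p. L p lam0 y1 y0) has_real_derivative dpsi L b lam0 y1 y0) (at b)"
        using hasD[OF ab(2) lam0 y] dpsi_eq[OF ab(2) lam0 y] by simp
    qed
    have ia: "integrable (Ym \<Otimes>\<^sub>M Ym) (\<lambda>z. dpsi L a lam0 (fst z) (snd z) * m (fst z) (snd z))"
      using Em_int ab(1) lam0 unfolding Em_integrable_def m_def L_def by blast
    have ib: "integrable (Ym \<Otimes>\<^sub>M Ym) (\<lambda>z. dpsi L b lam0 (fst z) (snd z) * m (fst z) (snd z))"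
      using Em_int ab(2) lam0 unfolding Em_integrable_def m_def L_def by blast
    have mnn: "0 \<le> m y1 y0" if "y1 \<in> space Ym" "y0 \<in> space Ym" for y1 y0
      unfolding m_def true_dens_def
      by (intro Bochner_Integration.integral_nonneg mult_nonneg_nonneg less_imp_le f1pos f0pos Psi(3) that fnn)
    define Dl where "Dl z = (dpsi L a lam0 (fst z) (snd z) - dpsi L b lam0 (fst z) (snd z)) * m (fst z) (snd z)" for z
    have iD: "integrable (Ym \<Otimes>\<^sub>M Ym) Dl"
      using Bochner_Integration.integrable_diff[OF ia ib] unfolding Dl_def left_diff_distrib .
    have "integral\<^sup>L (Ym \<Otimes>\<^sub>M Ym) Dl = 0"
      using Bochner_Integration.integral_diff[OF ia ib] Ea Eb unfolding Dl_def left_diff_distrib Em_def by simp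
    moreover have "AE z in Ym \<Otimes>\<^sub>M Ym. 0 \<le> Dl z"
      using gt mnn by (intro AE_I2) (auto simp: Dl_def space_pair_measure less_imp_le)
    ultimately have "AE z in Ym \<Otimes>\<^sub>M Ym. Dl z = 0"
      using integral_nonneg_eq_0_iff_AE[OF iD] by simp
    then have AEm: "AE z in Ym \<Otimes>\<^sub>M Ym. m (fst z) (snd z) = 0"
      apply (rule AE_mp) apply (rule AE_I2) using gt by (auto simp: Dl_def space_pair_measure) (metis less_irrefl)
    let ?g = "gpsi psis" and ?gi = "inv\<^bsub>G\<^esub> (gpsi psis)"
    have gm[measurable]: "actG ?g \<in> Gm \<rightarrow>\<^sub>M Gm" and gim[measurable]: "actG ?gi \<in> Gm \<rightarrow>\<^sub>M Gm"
      using actG_meas gG[OF Psi(3)] giG[OF Psi(3)] by auto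
    have k1m: "(\<lambda>z. F1 (actG ?g (fst z)) (snd z)) \<in> borel_measurable (Gm \<Otimes>\<^sub>M Ym)"
    proof -
      have "(\<lambda>z. (\<lambda>w. F1 (fst w) (snd w)) ((\<lambda>z. (actG ?g (fst z), snd z)) z)) \<in> borel_measurable (Gm \<Otimes>\<^sub>M Ym)"
        by (rule measurable_compose[OF _ F1_meas]) measurable
      then show ?thesis by simp
    qed
    have k0m: "(\<lambda>z. F0 (actG ?gi (fst z)) (snd z)) \<in> borel_measurable (Gm \<Otimes>\<^sub>M Ym)"
    proof -
      have "(\<lambda>z. (\<lambda>w. F0 (fst w) (snd w)) ((\<lambda>z. (actG ?gi (fst z), snd z)) z)) \<in> borel_measurable (Gm \<Otimes>\<^sub>M Ym)"
        by (rule measurable_compose[OF _ F0_meas]) measurable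
      then show ?thesis by simp
    qed
    have "\<not> (AE z in Ym \<Otimes>\<^sub>M Ym. (\<integral>\<gamma>. F1 (actG ?g \<gamma>) (fst z) * F0 (actG ?gi \<gamma>) (snd z) * f \<gamma> \<partial>Gm) = 0)"
      by (rule mass[OF sfY sfG k1m k0m _ _ f_dens])
         (use F1_dens F0_dens actG_sp gG[OF Psi(3)] giG[OF Psi(3)] in auto)
    moreover have "AE z in Ym \<Otimes>\<^sub>M Ym. (\<integral>\<gamma>. F1 (actG ?g \<gamma>) (fst z) * F0 (actG ?gi \<gamma>) (snd z) * f \<gamma> \<partial>Gm) = 0"
      using AEm
    proof (rule AE_mp, intro AE_I2 impI)
      fix z assume z: "z \<in> space (Ym \<Otimes>\<^sub>M Ym)" and mz: "m (fst z) (snd z) = 0"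
      have zs: "fst z \<in> space Ym" "snd z \<in> space Ym" using z by (auto simp: space_pair_measure)
      have "m (fst z) (snd z) = (\<integral>\<gamma>. F1 (actG ?g \<gamma>) (fst z) * F0 (actG ?gi \<gamma>) (snd z) * f \<gamma> \<partial>Gm)"
        unfolding m_def true_dens_def
        by (intro Bochner_Integration.integral_cong refl) (use sym_par Psi(3) zs in auto)
      with mz show "(\<integral>\<gamma>. F1 (actG ?g \<gamma>) (fst z) * F0 (actG ?gi \<gamma>) (snd z) * f \<gamma> \<partial>Gm) = 0" by simp
    qed
    ultimately show False by blast
  qed
  have uniq: "psi0 = psis" if "psi0 \<in> Psi" "lam0 \<in> Lam" "solves_score Ym m L psi0 lam0" for psi0 lam0
  proof -
    have E0: "Em Ym m (dpsi L psi0 lam0) = 0" using that(3) by (simp add: solves_score_def)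
    have E1: "Em Ym m (dpsi L psis lam0) = 0" by (rule score0[OF that(2)])
    show ?thesis
    proof (rule linorder_cases[of psi0 psis])
      assume "psi0 < psis" then show ?thesis using key[OF that(1) Psi(3) _ that(2) E0 E1] by blast
    next
      assume "psis < psi0" then show ?thesis using key[OF Psi(3) that(1) _ that(2) E1 E0] by blast
    qed
  qed
  show ?thesis using orth score0 iter uniq unfolding m_def L_def by blast
qed


end
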